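(* Let $X$ be a Banach space and $f_k:X\to\mathbb{R}\cup\{+\infty\}$ $(k\in\mathbb{N})$ proper convex functions such that $f:=\sup_{k\in\mathbb{N}}f_k$ is proper. Let $f_\infty(x):=\limsup_{k\to\infty}f_k(x)$ $(x\in X)$. Then $$\inf_{x\in X} f(x)=\max\Big\{\inf_{x\in X}\Big(\overline{\sum_{k\in\mathbb{N}}}\lambda_kf_k(x)+\lambda_\infty f_\infty(x)\Big):\ (\lambda_1,\lambda_2,\ldots)\in\ell^1_+,\ \lambda_\infty\ge0,\ \sum_{k=1}^{\infty}\lambda_k+\lambda_\infty=1\Big\},$$ in particular the maximum is attained.
   Context: $\ell^1_+$ is the set of sequences in $\ell^1$ with nonnegative entries. For $x\in X$, $\overline{\sum_{k\in\mathbb{N}}}\lambda_kf_k(x):=\limsup_{n\to\infty}\sum_{k=1}^n\lambda_kf_k(x)$. Conventions: $0\cdot(+\infty)=+\infty$ and $(+\infty)-(+\infty)=+\infty$. *)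

theory Defs
  imports "HOL-Analysis.Analysis"
begin

text \<open>Scalar multiplication of an extended real by a nonnegative real with the
  paper's convention 0 * (+infinity) = +infinity (otherwise the usual ereal product).\<close>
definition emul :: "real \<Rightarrow> ereal \<Rightarrow> ereal" where
  "emul l t = (if l = 0 \<and> t = \<infinity> then \<infinity> else ereal l * t)"

definition proper_fun :: "('a \<Rightarrow> ereal) \<Rightarrow> bool" where
  "proper_fun f \<longleftrightarrow> (\<forall>x. f x \<noteq> -\<infinity>) \<and> (\<exists>x. f x \<noteq> \<infinity>)"

definition convex_efun :: "('a::real_vector \<Rightarrow> ereal) \<Rightarrow> bool" where
  "convex_efun f \<longleftrightarrow> (\<forall>x y. \<forall>t::real. 0 < t \<and> t < 1 \<longrightarrow>
      f ((1 - t) *\<^sub>R x + t *\<^sub>R y) \<le> ereal (1 - t) * f x + ereal t * f y)"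

definition upper_series :: "(nat \<Rightarrow> real) \<Rightarrow> (nat \<Rightarrow> 'a \<Rightarrow> ereal) \<Rightarrow> 'a \<Rightarrow> ereal" where
  "upper_series l f x = limsup (\<lambda>n. \<Sum>k<n. emul (l k) (f k x))"

end

theory Submission
  imports Defs
begin


lemma two_fun:
  fixes u v :: "'a::real_vector \<Rightarrow> real"
  assumes C: "convex C" and cu: "convex_on C u" and cv: "convex_on C v"
    and mx: "\<And>x. x \<in> C \<Longrightarrow> \<alpha> \<le> max (u x) (v x)"
  shows "\<exists>t. 0 \<le> t \<and> t \<le> 1 \<and> (\<forall>x\<in>C. \<alpha> \<le> (1 - t) * u x + t * v x)"
proof (cases "C = {}")
  case True then show ?thesis by auto
next
  case False
  define S where "S = {y::real\<times>real. fst y < \<alpha> \<and> snd y < \<alpha>}"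
  define T where "T = {y::real\<times>real. \<exists>x\<in>C. u x \<le> fst y \<and> v x \<le> snd y}"
  have cS: "convex S" unfolding S_def convex_def by (auto intro: convex_bound_lt)
  have cT: "convex T" unfolding T_def convex_def
  proof (clarify)
    fix a b :: "real\<times>real" and p q :: real and x y
    assume h: "0 \<le> p" "0 \<le> q" "p + q = 1" "x \<in> C" "u x \<le> fst a" "v x \<le> snd a"
       "y \<in> C" "u y \<le> fst b" "v y \<le> snd b"
    have z: "p *\<^sub>R x + q *\<^sub>R y \<in> C" using C h by (simp add: convex_def)
    have "u (p *\<^sub>R x + q *\<^sub>R y) \<le> p * u x + q * u y" using cu h by (simp add: convex_on_def)
    also have "\<dots> \<le> p * fst a + q * fst b" using h by (simp add: add_mono mult_left_mono)
    finally have 1: "u (p *\<^sub>R x + q *\<^sub>R y) \<le> fst (p *\<^sub>R a + q *\<^sub>R b)" by simp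
    have "v (p *\<^sub>R x + q *\<^sub>R y) \<le> p * v x + q * v y" using cv h by (simp add: convex_on_def)
    also have "\<dots> \<le> p * snd a + q * snd b" using h by (simp add: add_mono mult_left_mono)
    finally have 2: "v (p *\<^sub>R x + q *\<^sub>R y) \<le> snd (p *\<^sub>R a + q *\<^sub>R b)" by simp
    show "\<exists>z\<in>C. u z \<le> fst (p *\<^sub>R a + q *\<^sub>R b) \<and> v z \<le> snd (p *\<^sub>R a + q *\<^sub>R b)"
      using z 1 2 by blast
  qed
  have "(\<alpha>-1,\<alpha>-1) \<in> S" unfolding S_def by auto
  then have nS: "S \<noteq> {}" by blast
  obtain x0 where "x0 \<in> C" using False by auto
  then have nT: "T \<noteq> {}" unfolding T_def by (auto intro!: exI[of _ "(u x0, v x0)"])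
  have dj: "S \<inter> T = {}"
  proof (rule ccontr)
    assume "S \<inter> T \<noteq> {}"
    then obtain y x where "fst y < \<alpha>" "snd y < \<alpha>" "x \<in> C" "u x \<le> fst y" "v x \<le> snd y"
      unfolding S_def T_def by auto
    with mx[of x] show False by auto
  qed
  obtain w b where w: "w \<noteq> 0" and hS: "\<forall>y\<in>S. inner w y \<le> b" and hT: "\<forall>y\<in>T. inner w y \<ge> b"
    using separating_hyperplane_sets[OF cS cT nS nT dj] by blast
  obtain w1 w2 where ww: "w = (w1, w2)" by (cases w)
  have Sin: "\<And>y1 y2. y1 < \<alpha> \<Longrightarrow> y2 < \<alpha> \<Longrightarrow> w1 * y1 + w2 * y2 \<le> b"
    using hS ww unfolding S_def by (auto simp: inner_prod_def)
  have w1: "w1 \<ge> 0"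
  proof (rule ccontr)
    assume "\<not> w1 \<ge> 0"
    then have n: "w1 < 0" by simp
    define K where "K = (\<bar>b\<bar> + \<bar>w1 * (\<alpha> - 1)\<bar> + \<bar>w2 * (\<alpha> - 1)\<bar> + 1) / (- w1)"
    have K: "K \<ge> 0" unfolding K_def by (rule divide_nonneg_pos) (use n in auto)
    have "w1 * (\<alpha> - 1 - K) + w2 * (\<alpha> - 1) \<le> b" using Sin K by auto
    moreover have "- w1 * K = \<bar>b\<bar> + \<bar>w1 * (\<alpha> - 1)\<bar> + \<bar>w2 * (\<alpha> - 1)\<bar> + 1"
      unfolding K_def using n by simp
    ultimately show False by (auto simp: algebra_simps)
  qed
  have w2: "w2 \<ge> 0"
  proof (rule ccontr)
    assume "\<not> w2 \<ge> 0"
    then have n: "w2 < 0" by simp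
    define K where "K = (\<bar>b\<bar> + \<bar>w1 * (\<alpha> - 1)\<bar> + \<bar>w2 * (\<alpha> - 1)\<bar> + 1) / (- w2)"
    have K: "K \<ge> 0" unfolding K_def by (rule divide_nonneg_pos) (use n in auto)
    have "w1 * (\<alpha> - 1) + w2 * (\<alpha> - 1 - K) \<le> b" using Sin K by auto
    moreover have "- w2 * K = \<bar>b\<bar> + \<bar>w1 * (\<alpha> - 1)\<bar> + \<bar>w2 * (\<alpha> - 1)\<bar> + 1"
      unfolding K_def using n by simp
    ultimately show False by (auto simp: algebra_simps)
  qed
  define s where "s = w1 + w2"
  have "w1 \<noteq> 0 \<or> w2 \<noteq> 0" using w ww by (auto simp: zero_prod_def)
  then have s: "s > 0" using w1 w2 unfolding s_def by auto
  have sb: "s * \<alpha> \<le> b"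
  proof (rule ccontr)
    assume "\<not> s * \<alpha> \<le> b"
    define e where "e = (s * \<alpha> - b) / (2 * s)"
    have e: "e > 0" unfolding e_def using s \<open>\<not> s * \<alpha> \<le> b\<close> by auto
    have "w1 * (\<alpha> - e) + w2 * (\<alpha> - e) \<le> b" using Sin e by auto
    moreover have "s * e = (s * \<alpha> - b) / 2" unfolding e_def using s by simp
    ultimately show False using \<open>\<not> s * \<alpha> \<le> b\<close> unfolding s_def by (auto simp: algebra_simps)
  qed
  show ?thesis
  proof (intro exI[of _ "w2 / s"] conjI ballI)
    show "0 \<le> w2 / s" using w2 s by simp
    show "w2 / s \<le> 1" using w1 s unfolding s_def by simp
    fix x assume "x \<in> C"
    then have "(u x, v x) \<in> T" unfolding T_def by auto
    then have "w1 * u x + w2 * v x \<ge> b" using hT ww by (auto simp: inner_prod_def)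
    then have "s * \<alpha> \<le> w1 * u x + w2 * v x" using sb by linarith
    moreover have e1: "1 - w2 / s = w1 / s" using s unfolding s_def by (simp add: field_simps)
    have "(1 - w2 / s) * u x + w2 / s * v x = (w1 * u x + w2 * v x) / s"
      unfolding e1 by (simp add: add_divide_distrib)
    ultimately show "\<alpha> \<le> (1 - w2 / s) * u x + w2 / s * v x"
      using s by (simp add: pos_le_divide_eq mult.commute)
  qed
qed



lemma convex_on_psum:
  assumes "convex C" "\<And>k. convex_on C (a k)" "\<And>k. 0 \<le> l k"
  shows "convex_on C (\<lambda>x. \<Sum>k<(n::nat). l k * a k x)"
proof (induction n)
  case 0 then show ?case using assms by (simp add: convex_on_const)
next
  case (Suc n)
  have "convex_on C (\<lambda>x. l n * a n x)" using assms by (intro convex_on_cmul) auto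
  then show ?case using Suc by (simp add: convex_on_add)
qed

lemma seq_construct:
  fixes a s :: "nat \<Rightarrow> 'a::real_vector \<Rightarrow> real"
  assumes C: "convex C" and ca: "\<And>k. convex_on C (a k)" and cs: "\<And>N. convex_on C (s N)"
    and smax: "\<And>N x. x \<in> C \<Longrightarrow> s N x = max (a N x) (s (Suc N) x)"
    and s0: "\<And>x. x \<in> C \<Longrightarrow> \<alpha> \<le> s 0 x"
  shows "\<exists>l. (\<forall>k. 0 \<le> l k) \<and> (\<forall>N. (\<Sum>k<N. l k) \<le> 1) \<and>
     (\<forall>N. \<forall>x\<in>C. \<alpha> \<le> (\<Sum>k<N. l k * a k x) + (1 - (\<Sum>k<N. l k)) * s N x)"
proof -
  define P where "P = (\<lambda>n (l::nat \<Rightarrow> real). (\<forall>k. 0 \<le> l k) \<and> (\<Sum>k<n. l k) \<le> 1 \<and>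
     (\<forall>x\<in>C. \<alpha> \<le> (\<Sum>k<n. l k * a k x) + (1 - (\<Sum>k<n. l k)) * s n x))"
  define Q where "Q = (\<lambda>n (l::nat \<Rightarrow> real) l'. \<forall>k<n. l' k = l k)"
  have P0: "\<exists>l. P 0 l" unfolding P_def using s0 by (intro exI[of _ "\<lambda>_. 0"]) auto
  have Pstep: "\<exists>l'. P (Suc n) l' \<and> Q n l l'" if Pl: "P n l" for n l
  proof -
    define r where "r = 1 - (\<Sum>k<n. l k)"
    have r: "0 \<le> r" using Pl unfolding P_def r_def by auto
    have l0: "\<And>k. 0 \<le> l k" using Pl unfolding P_def by auto
    define A where "A = (\<lambda>x. \<Sum>k<(n::nat). l k * a k x)"
    have cA: "convex_on C A" unfolding A_def using convex_on_psum[OF C ca l0] .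
    define u where "u = (\<lambda>x. A x + r * a n x)"
    define v where "v = (\<lambda>x. A x + r * s (Suc n) x)"
    have cu: "convex_on C u" unfolding u_def using cA ca r by (intro convex_on_add convex_on_cmul) auto
    have cv: "convex_on C v" unfolding v_def using cA cs r by (intro convex_on_add convex_on_cmul) auto
    have mx: "\<alpha> \<le> max (u x) (v x)" if "x \<in> C" for x
    proof -
      have "\<alpha> \<le> A x + r * s n x" using Pl that unfolding P_def A_def r_def by auto
      also have "r * s n x = max (r * a n x) (r * s (Suc n) x)"
      proof (cases "a n x \<le> s (Suc n) x")
        case True
        then show ?thesis using smax[of x n, OF that] mult_left_mono[OF True r] by simp
      next
        case False
        then have le: "s (Suc n) x \<le> a n x" by simp
        show ?thesis using smax[of x n, OF that] mult_left_mono[OF le r] le by simp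
      qed
      finally show ?thesis unfolding u_def v_def by linarith
    qed
    obtain t where t: "0 \<le> t" "t \<le> 1" "\<forall>x\<in>C. \<alpha> \<le> (1 - t) * u x + t * v x"
      using two_fun[OF C cu cv mx] by blast
    define l' where "l' = l(n := (1 - t) * r)"
    have sl: "(\<Sum>k<Suc n. l' k) = (\<Sum>k<n. l k) + (1 - t) * r"
      unfolding l'_def by simp
    have sa: "(\<Sum>k<Suc n. l' k * a k x) = A x + (1 - t) * r * a n x" for x
      unfolding l'_def A_def by simp
    have "P (Suc n) l'"
      unfolding P_def
    proof (intro conjI allI ballI)
      fix k show "0 \<le> l' k" using l0[of k] r t by (auto simp: l'_def)
    next
      show "(\<Sum>k<Suc n. l' k) \<le> 1"
      proof -
        have "(1 - t) * r \<le> r" using r t by (simp add: mult_left_le_one_le)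
        then show ?thesis unfolding sl r_def by linarith
      qed
    next
      fix x assume x: "x \<in> C"
      have e: "1 - (\<Sum>k<Suc n. l' k) = t * r" unfolding sl r_def by (simp add: algebra_simps)
      have "(\<Sum>k<Suc n. l' k * a k x) + (1 - (\<Sum>k<Suc n. l' k)) * s (Suc n) x
          = A x + (1 - t) * r * a n x + t * r * s (Suc n) x" unfolding e sa by simp
      also have "\<dots> = (1 - t) * u x + t * v x"
        unfolding u_def v_def by (simp add: algebra_simps)
      finally have "(\<Sum>k<Suc n. l' k * a k x) + (1 - (\<Sum>k<Suc n. l' k)) * s (Suc n) x
          = (1 - t) * u x + t * v x" .
      then show "\<alpha> \<le> (\<Sum>k<Suc n. l' k * a k x) + (1 - (\<Sum>k<Suc n. l' k)) * s (Suc n) x"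
        using t(3)[rule_format, OF x] by linarith
    qed
    moreover have "Q n l l'" unfolding Q_def l'_def by auto
    ultimately show ?thesis by blast
  qed
  obtain f where f: "\<And>n. P n (f n) \<and> Q n (f n) (f (Suc n))"
    using dependent_nat_choice[of P Q, OF P0 Pstep] by blast
  define L where "L = (\<lambda>k. f (Suc k) k)"
  have fL: "k < n \<Longrightarrow> f n k = L k" for n k
  proof (induction n)
    case 0 then show ?case by simp
  next
    case (Suc n)
    show ?case
    proof (cases "k = n")
      case True then show ?thesis unfolding L_def by simp
    next
      case False
      then have "k < n" using Suc by simp
      then show ?thesis using f[of n] Suc unfolding Q_def by auto
    qed
  qed
  have sumL: "(\<Sum>k<N. L k) = (\<Sum>k<N. f N k)" for N by (rule sum.cong) (auto simp: fL)
  have sumLa: "(\<Sum>k<N. L k * a k x) = (\<Sum>k<N. f N k * a k x)" for N x by (rule sum.cong) (auto simp: fL)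
  show ?thesis
  proof (intro exI[of _ L] conjI allI ballI)
    fix k show "0 \<le> L k" using f[of "Suc k"] unfolding L_def P_def by auto
  next
    fix N show "(\<Sum>k<N. L k) \<le> 1" unfolding sumL using f[of N] unfolding P_def by auto
  next
    fix N x assume "x \<in> C"
    then show "\<alpha> \<le> (\<Sum>k<N. L k * a k x) + (1 - (\<Sum>k<N. L k)) * s N x"
      unfolding sumL sumLa using f[of N] unfolding P_def by auto
  qed
qed



lemma limsup_tendsto_eq:
  fixes u :: "nat \<Rightarrow> ereal"
  assumes "u \<longlonglongrightarrow> c" shows "limsup u = c"
  using lim_imp_Limsup[OF trivial_limit_sequentially assms] .

lemma limit_part:
  fixes b sN l :: "nat \<Rightarrow> real" and M \<alpha> li :: real
  assumes bM: "\<And>k. b k \<le> M" and l0: "\<And>k. 0 \<le> l k" and sl: "summable l"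
    and li: "li = 1 - suminf l" and li0: "0 \<le> li"
    and sN: "\<And>N. ereal (sN N) = (SUP k\<in>{N..}. ereal (b k))"
    and ineq: "\<And>N. \<alpha> \<le> (\<Sum>k<N. l k * b k) + (1 - (\<Sum>k<N. l k)) * sN N"
  shows "ereal \<alpha> \<le> limsup (\<lambda>n. ereal (\<Sum>k<n. l k * b k)) + emul li (limsup (\<lambda>k. ereal (b k)))"
proof -
  define t where "t = (\<lambda>N. suminf l - (\<Sum>k<N. l k))"
  have t0: "0 \<le> t N" for N unfolding t_def using sum_le_suminf[OF sl, of "{..<N}"] l0 by auto
  have tlim: "t \<longlonglongrightarrow> 0" unfolding t_def
    using tendsto_diff[OF tendsto_const[of "suminf l"] summable_LIMSEQ[OF sl]] by simp
  have sNM: "sN N \<le> M" for N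
  proof -
    have "ereal (sN N) \<le> ereal M" unfolding sN by (rule SUP_least) (use bM in auto)
    then show ?thesis by simp
  qed
  define L where "L = limsup (\<lambda>k. ereal (b k))"
  have LM: "L \<le> ereal M" unfolding L_def limsup_INF_SUP
    by (rule INF_lower2[of 0]) (auto intro!: SUP_least simp: bM)
  have step: "ereal \<alpha> \<le> ereal (\<Sum>k<N. l k * b k) + (ereal li * ereal (sN N) + ereal (t N * M))" for N
  proof -
    have e: "1 - (\<Sum>k<N. l k) = li + t N" unfolding li t_def by simp
    have "(1 - (\<Sum>k<N. l k)) * sN N = li * sN N + t N * sN N" unfolding e by (simp add: distrib_right)
    then have "\<alpha> \<le> (\<Sum>k<N. l k * b k) + li * sN N + t N * sN N" using ineq[of N]
      by linarith
    moreover have "t N * sN N \<le> t N * M" using t0 sNM by (simp add: mult_left_mono)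
    ultimately show ?thesis by simp
  qed
  have A: "ereal \<alpha> \<le> limsup (\<lambda>N. ereal (\<Sum>k<N. l k * b k) + (ereal li * ereal (sN N) + ereal (t N * M)))"
  proof -
    have "limsup (\<lambda>_. ereal \<alpha>) \<le> limsup (\<lambda>N. ereal (\<Sum>k<N. l k * b k) + (ereal li * ereal (sN N) + ereal (t N * M)))"
      by (intro Limsup_mono always_eventually allI step)
    then show ?thesis by (simp add: Limsup_const)
  qed
  have B: "limsup (\<lambda>N. ereal (\<Sum>k<N. l k * b k) + (ereal li * ereal (sN N) + ereal (t N * M)))
     \<le> limsup (\<lambda>N. ereal (\<Sum>k<N. l k * b k)) + limsup (\<lambda>N. ereal li * ereal (sN N) + ereal (t N * M))"
    by (rule ereal_limsup_add_mono)
  have C: "limsup (\<lambda>N. ereal li * ereal (sN N) + ereal (t N * M)) \<le>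
      limsup (\<lambda>N. ereal li * ereal (sN N)) + limsup (\<lambda>N. ereal (t N * M))"
    by (rule ereal_limsup_add_mono)
  have D: "limsup (\<lambda>N. ereal (t N * M)) = 0"
  proof -
    have "(\<lambda>N. t N * M) \<longlonglongrightarrow> 0 * M" by (intro tendsto_intros tlim)
    then have "(\<lambda>N. ereal (t N * M)) \<longlonglongrightarrow> ereal 0" by simp
    then show ?thesis using limsup_tendsto_eq by (simp add: zero_ereal_def)
  qed
  have E: "limsup (\<lambda>N. ereal li * ereal (sN N)) = ereal li * L"
  proof -
    have dec: "decseq (\<lambda>N. ereal (sN N))" unfolding sN decseq_def
      by (auto intro!: SUP_subset_mono)
    have "(\<lambda>N. ereal (sN N)) \<longlonglongrightarrow> L"
      unfolding L_def limsup_INF_SUP sN[symmetric] using LIMSEQ_INF[OF dec] .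
    then have "(\<lambda>N. ereal li * ereal (sN N)) \<longlonglongrightarrow> ereal li * L"
      by (intro tendsto_cmult_ereal) auto
    then show ?thesis by (rule limsup_tendsto_eq)
  qed
  have F: "ereal li * L = emul li L"
    using LM unfolding emul_def by auto
  have "limsup (\<lambda>N. ereal li * ereal (sN N) + ereal (t N * M)) \<le> emul li L"
    using C unfolding D E F by simp
  then have "ereal \<alpha> \<le> limsup (\<lambda>N. ereal (\<Sum>k<N. l k * b k)) + emul li L"
    using A B by (meson add_left_mono order_trans)
  then show ?thesis unfolding L_def .
qed



lemma emul_inf: "0 \<le> l \<Longrightarrow> emul l \<infinity> = \<infinity>"
  unfolding emul_def by auto

lemma emul_not_minf: "0 \<le> l \<Longrightarrow> t \<noteq> -\<infinity> \<Longrightarrow> emul l t \<noteq> -\<infinity>"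
  unfolding emul_def by (cases t) auto

lemma outside:
  fixes f :: "nat \<Rightarrow> 'a \<Rightarrow> ereal"
  assumes nm: "\<And>k. f k x \<noteq> -\<infinity>" and Fi: "(SUP k. f k x) = \<infinity>"
    and l0: "\<And>k. 0 \<le> l k" and li0: "0 \<le> li"
  shows "upper_series l f x + emul li (limsup (\<lambda>k. f k x)) = \<infinity>"
proof (cases "\<exists>k. f k x = \<infinity>")
  case True
  then obtain k where k: "f k x = \<infinity>" by auto
  have "eventually (\<lambda>n. \<infinity> \<le> (\<Sum>j<n. emul (l j) (f j x))) sequentially"
  proof (rule eventually_sequentiallyI[of "Suc k"])
    fix n assume "Suc k \<le> n"
    then have "k \<in> {..<n}" by auto
    then have "(\<Sum>j<n. emul (l j) (f j x)) = \<infinity>"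
      using k emul_inf[OF l0[of k]] by (subst sum_Pinfty) (auto intro!: bexI[of _ k])
    then show "\<infinity> \<le> (\<Sum>j<n. emul (l j) (f j x))" by simp
  qed
  then have "limsup (\<lambda>_. \<infinity>::ereal) \<le> upper_series l f x"
    unfolding upper_series_def by (rule Limsup_mono)
  then have "upper_series l f x = \<infinity>" by (simp add: Limsup_const)
  then show ?thesis by simp
next
  case False
  have "limsup (\<lambda>k. f k x) = \<infinity>"
  proof (rule ccontr)
    assume "limsup (\<lambda>k. f k x) \<noteq> \<infinity>"
    then have "(INF n. SUP m\<in>{n..}. f m x) < \<infinity>" unfolding limsup_INF_SUP by (simp add: less_top)
    then obtain N where N: "(SUP m\<in>{N..}. f m x) < \<infinity>" using INF_less_iff[THEN iffD1] by blast
    define B where "B = (\<Sum>m<N. \<bar>real_of_ereal (f m x)\<bar>)"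
    have "f m x \<le> max (ereal B) (SUP m\<in>{N..}. f m x)" for m
    proof (cases "m < N")
      case True
      have fin: "f m x = ereal (real_of_ereal (f m x))" using False nm[of m] by (cases "f m x") auto
      have "real_of_ereal (f m x) \<le> \<bar>real_of_ereal (f m x)\<bar>" by (rule abs_ge_self)
      also have "\<dots> \<le> B" unfolding B_def
      proof (rule member_le_sum)
        show "m \<in> {..<N}" using True by simp
        show "finite {..<N}" by simp
        fix i show "0 \<le> \<bar>real_of_ereal (f i x)\<bar>" by (rule abs_ge_zero)
      qed
      finally have "f m x \<le> ereal B" using fin by (metis ereal_less_eq(3))
      then show ?thesis by (simp add: le_max_iff_disj)
    next
      case False
      then have "f m x \<le> (SUP m\<in>{N..}. f m x)" by (intro SUP_upper) auto
      then show ?thesis by (simp add: le_max_iff_disj)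
    qed
    then have "(SUP k. f k x) \<le> max (ereal B) (SUP m\<in>{N..}. f m x)" by (intro SUP_least)
    also have "\<dots> < \<infinity>" using N by (simp add: max_def)
    finally show False using Fi by simp
  qed
  then show ?thesis using emul_inf[OF li0] by simp
qed

lemma weak_pt:
  fixes f :: "nat \<Rightarrow> 'a \<Rightarrow> ereal"
  assumes nm: "\<And>k. f k x \<noteq> -\<infinity>"
    and l0: "\<And>k. 0 \<le> l k" and sl: "summable l" and li0: "0 \<le> li" and s1: "suminf l + li = 1"
  shows "upper_series l f x + emul li (limsup (\<lambda>k. f k x)) \<le> (SUP k. f k x)"
proof (cases "(SUP k. f k x) = \<infinity>")
  case True then show ?thesis by simp
next
  case False
  define M where "M = real_of_ereal (SUP k. f k x)"
  have FM: "(SUP k. f k x) = ereal M"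
    unfolding M_def using False nm[of 0] SUP_upper[of 0 UNIV "\<lambda>k. f k x"]
    by (cases "SUP k. f k x") auto
  have fkM: "f k x \<le> ereal M" for k using FM SUP_upper[of k UNIV "\<lambda>k. f k x"] by simp
  define b where "b k = real_of_ereal (f k x)" for k
  have fb: "f k x = ereal (b k)" for k unfolding b_def using fkM[of k] nm[of k]
    by (cases "f k x") auto
  have bM: "b k \<le> M" for k using fkM[of k] fb[of k] by simp
  have us: "upper_series l f x = limsup (\<lambda>n. ereal (\<Sum>k<n. l k * b k))"
    unfolding upper_series_def fb emul_def by simp
  have "limsup (\<lambda>n. ereal (\<Sum>k<n. l k * b k)) \<le> limsup (\<lambda>n. ereal ((\<Sum>k<n. l k) * M))"
  proof (intro Limsup_mono always_eventually allI)
    fix n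
    have "(\<Sum>k<n. l k * b k) \<le> (\<Sum>k<n. l k * M)" by (intro sum_mono mult_left_mono bM l0)
    then show "ereal (\<Sum>k<n. l k * b k) \<le> ereal ((\<Sum>k<n. l k) * M)" by (simp add: sum_distrib_right)
  qed
  also have "limsup (\<lambda>n. ereal ((\<Sum>k<n. l k) * M)) = ereal (suminf l * M)"
    by (intro limsup_tendsto_eq tendsto_ereal tendsto_intros summable_LIMSEQ sl)
  finally have U: "upper_series l f x \<le> ereal (suminf l * M)" unfolding us .
  have LM: "limsup (\<lambda>k. f k x) \<le> ereal M" unfolding limsup_INF_SUP
    by (rule INF_lower2[of 0]) (auto intro!: SUP_least simp: fkM)
  have V: "emul li (limsup (\<lambda>k. f k x)) \<le> ereal (li * M)"
  proof (cases "li = 0")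
    case True
    then show ?thesis using LM unfolding emul_def by (cases "limsup (\<lambda>k. f k x)") auto
  next
    case False
    then have "emul li (limsup (\<lambda>k. f k x)) = ereal li * limsup (\<lambda>k. f k x)"
      using LM unfolding emul_def by auto
    also have "\<dots> \<le> ereal li * ereal M" using LM li0 by (intro ereal_mult_left_mono) auto
    finally show ?thesis by simp
  qed
  have "upper_series l f x + emul li (limsup (\<lambda>k. f k x)) \<le> ereal (suminf l * M) + ereal (li * M)"
    using U V by (rule add_mono)
  also have "\<dots> = ereal M" using s1 by (simp add: distrib_right[symmetric])
  finally show ?thesis using FM by simp
qed

lemma sup_convex:
  fixes f :: "nat \<Rightarrow> 'a::real_vector \<Rightarrow> ereal"
  assumes cv: "\<And>k. convex_efun (f k)" and t: "0 < t" "t < 1"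
  shows "(SUP k\<in>K. f k ((1 - t) *\<^sub>R x + t *\<^sub>R y)) \<le> ereal (1 - t) * (SUP k\<in>K. f k x) + ereal t * (SUP k\<in>K. f k y)"
proof (rule SUP_least)
  fix k assume k: "k \<in> K"
  have "f k ((1 - t) *\<^sub>R x + t *\<^sub>R y) \<le> ereal (1 - t) * f k x + ereal t * f k y"
    using cv[of k] t unfolding convex_efun_def by auto
  also have "\<dots> \<le> ereal (1 - t) * (SUP k\<in>K. f k x) + ereal t * (SUP k\<in>K. f k y)"
    using t k by (intro add_mono ereal_mult_left_mono SUP_upper) auto
  finally show "f k ((1 - t) *\<^sub>R x + t *\<^sub>R y) \<le> ereal (1 - t) * (SUP k\<in>K. f k x) + ereal t * (SUP k\<in>K. f k y)" .
qed

lemma convex_on_ereal: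
  fixes g :: "'a::real_vector \<Rightarrow> ereal"
  assumes D: "convex D" and fin: "\<And>x. x \<in> D \<Longrightarrow> \<bar>g x\<bar> \<noteq> \<infinity>"
    and cv: "\<And>x y (t::real). x \<in> D \<Longrightarrow> y \<in> D \<Longrightarrow> 0 < t \<Longrightarrow> t < 1 \<Longrightarrow>
       g ((1 - t) *\<^sub>R x + t *\<^sub>R y) \<le> ereal (1 - t) * g x + ereal t * g y"
  shows "convex_on D (\<lambda>x. real_of_ereal (g x))"
proof (rule convex_onI[OF _ D])
  fix t :: real and x y assume t: "0 < t" "t < 1" and xy: "x \<in> D" "y \<in> D"
  have z: "(1 - t) *\<^sub>R x + t *\<^sub>R y \<in> D" using D xy t by (simp add: convex_def)
  obtain a where a: "g x = ereal a" using fin[OF xy(1)] by (cases "g x") auto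
  obtain b where b: "g y = ereal b" using fin[OF xy(2)] by (cases "g y") auto
  obtain c where c: "g ((1 - t) *\<^sub>R x + t *\<^sub>R y) = ereal c" using fin[OF z] by (cases "g ((1 - t) *\<^sub>R x + t *\<^sub>R y)") auto
  show "real_of_ereal (g ((1 - t) *\<^sub>R x + t *\<^sub>R y)) \<le> (1 - t) * real_of_ereal (g x) + t * real_of_ereal (g y)"
    using cv[OF xy t] a b c by simp
qed



theorem proposition3p2:
  fixes f :: "nat \<Rightarrow> 'a::banach \<Rightarrow> ereal"
  assumes proper_k: "\<And>k. proper_fun (f k)"
    and convex_k: "\<And>k. convex_efun (f k)"
    and proper_sup: "proper_fun (\<lambda>x. SUP k. f k x)"
  defines "f_inf \<equiv> (\<lambda>x. limsup (\<lambda>k. f k x))"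
  defines "Lam \<equiv> {(l, li). (\<forall>k. 0 \<le> l k) \<and> summable l \<and> 0 \<le> li \<and> suminf l + li = 1}"
  defines "val \<equiv> (\<lambda>(l, li). INF x. upper_series l f x + emul li (f_inf x))"
  shows "(\<exists>p\<in>Lam. val p = (INF x. SUP k. f k x))
       \<and> (\<forall>p\<in>Lam. val p \<le> (INF x. SUP k. f k x))"
proof -
  have nm: "\<And>k x. f k x \<noteq> -\<infinity>" using proper_k unfolding proper_fun_def by auto
  have valeq: "val (l, li) = (INF x. upper_series l f x + emul li (f_inf x))" for l li
    unfolding val_def by simp
  have weak: "\<forall>p\<in>Lam. val p \<le> (INF x. SUP k. f k x)"
  proof
    fix p assume "p \<in> Lam"
    then obtain l li where p: "p = (l, li)" "\<And>k. 0 \<le> l k" "summable l" "0 \<le> li" "suminf l + li = 1"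
      unfolding Lam_def by auto
    show "val p \<le> (INF x. SUP k. f k x)"
      unfolding p(1) valeq f_inf_def
      by (intro INF_mono' weak_pt nm p(2-5))
  qed
  have strong: "\<exists>p\<in>Lam. (INF x. SUP k. f k x) \<le> val p"
  proof (cases "(INF x. SUP k. f k x) = -\<infinity>")
    case True
    have "((\<lambda>_. 0), 1) \<in> Lam" unfolding Lam_def by auto
    then show ?thesis using True by auto
  next
    case False
    obtain x0 where x0: "(SUP k. f k x0) \<noteq> \<infinity>" using proper_sup unfolding proper_fun_def by auto
    have "(INF x. SUP k. f k x) \<le> (SUP k. f k x0)" by (rule INF_lower) simp
    then have "(INF x. SUP k. f k x) \<noteq> \<infinity>" using x0 by auto
    then obtain \<alpha> where \<alpha>: "(INF x. SUP k. f k x) = ereal \<alpha>" using False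
      by (cases "(INF x. SUP k. f k x)") auto
    have Fa: "ereal \<alpha> \<le> (SUP k. f k x)" for x unfolding \<alpha>[symmetric] by (rule INF_lower) simp
    define D where "D = {x. (SUP k. f k x) \<noteq> \<infinity>}"
    define G where "G = (\<lambda>N x. SUP k\<in>{N..}. f k x)"
    have G0: "G 0 x = (SUP k. f k x)" for x unfolding G_def by simp
    have fG: "f N x \<le> G N x" for N x unfolding G_def by (rule SUP_upper) simp
    have GF: "G N x \<le> (SUP k. f k x)" for N x unfolding G_def by (rule SUP_subset_mono) auto
    have finf: "\<bar>f k x\<bar> \<noteq> \<infinity>" if "x \<in> D" for k x
    proof -
      have "f k x \<le> (SUP k. f k x)" by (rule SUP_upper) simp
      then have "f k x \<noteq> \<infinity>" using that unfolding D_def by auto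
      then show ?thesis using nm[of k x] by auto
    qed
    have Gfin: "\<bar>G N x\<bar> \<noteq> \<infinity>" if "x \<in> D" for N x
    proof -
      have "G N x \<noteq> \<infinity>" using GF[of N x] that unfolding D_def by auto
      moreover have "G N x \<noteq> -\<infinity>" using fG[of N x] nm[of N x] by auto
      ultimately show ?thesis by auto
    qed
    have Gcv: "G N ((1 - t) *\<^sub>R x + t *\<^sub>R y) \<le> ereal (1 - t) * G N x + ereal t * G N y"
      if "0 < t" "t < 1" for N x y t
      unfolding G_def by (rule sup_convex[OF convex_k that])
    have cD: "convex D" unfolding convex_alt
    proof (intro ballI allI impI)
      fix x y and u :: real assume xy: "x \<in> D" "y \<in> D" and u: "0 \<le> u \<and> u \<le> 1"
      show "(1 - u) *\<^sub>R x + u *\<^sub>R y \<in> D"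
      proof (cases "u = 0 \<or> u = 1")
        case True then show ?thesis using xy by auto
      next
        case False
        then have u': "0 < u" "u < 1" using u by auto
        have "G 0 ((1 - u) *\<^sub>R x + u *\<^sub>R y) \<le> ereal (1 - u) * G 0 x + ereal u * G 0 y"
          by (rule Gcv[OF u'])
        also have "\<dots> < \<infinity>" using Gfin[OF xy(1), of 0] Gfin[OF xy(2), of 0]
          by (cases "G 0 x"; cases "G 0 y") auto
        finally show ?thesis unfolding D_def G0 by auto
      qed
    qed
    define a where "a = (\<lambda>k x. real_of_ereal (f k x))"
    define s where "s = (\<lambda>N x. real_of_ereal (G N x))"
    have fa: "f k x = ereal (a k x)" if "x \<in> D" for k x
      unfolding a_def using finf[OF that, of k] by (cases "f k x") auto
    have Gs: "G N x = ereal (s N x)" if "x \<in> D" for N x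
      unfolding s_def using Gfin[OF that, of N] by (cases "G N x") auto
    have ca: "convex_on D (a k)" for k
      unfolding a_def
      by (rule convex_on_ereal[OF cD finf]) (use convex_k[of k] in \<open>auto simp: convex_efun_def\<close>)
    have cs: "convex_on D (s N)" for N
      unfolding s_def by (rule convex_on_ereal[OF cD Gfin Gcv])
    have smax: "s N x = max (a N x) (s (Suc N) x)" if "x \<in> D" for N x
    proof -
      have "{N..} = insert N {Suc N..}" by auto
      then have "G N x = sup (f N x) (G (Suc N) x)" unfolding G_def by simp
      then have "ereal (s N x) = max (ereal (a N x)) (ereal (s (Suc N) x))"
        using Gs[OF that] fa[OF that] by (simp add: sup_max)
      then show ?thesis by (auto simp: max_def split: if_splits)
    qed
    have s0: "\<alpha> \<le> s 0 x" if "x \<in> D" for x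
      using Fa[of x] Gs[OF that, of 0] unfolding G0 by simp
    obtain l where l0: "\<And>k. 0 \<le> l k" and l1: "\<And>N. (\<Sum>k<N. l k) \<le> 1"
      and lineq: "\<And>N x. x \<in> D \<Longrightarrow> \<alpha> \<le> (\<Sum>k<N. l k * a k x) + (1 - (\<Sum>k<N. l k)) * s N x"
      using seq_construct[OF cD ca cs smax s0] by blast
    have sl: "summable l" by (rule summableI_nonneg_bounded[OF l0 l1])
    define li where "li = 1 - suminf l"
    have li0: "0 \<le> li" unfolding li_def using suminf_le_const[OF sl l1] by simp
    have inLam: "(l, li) \<in> Lam" unfolding Lam_def li_def using l0 sl li0 li_def by auto
    have "ereal \<alpha> \<le> upper_series l f x + emul li (f_inf x)" for x
    proof (cases "x \<in> D")
      case False
      then have "(SUP k. f k x) = \<infinity>" unfolding D_def by simp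
      then have "upper_series l f x + emul li (limsup (\<lambda>k. f k x)) = \<infinity>"
        by (intro outside[of f x l li] nm l0 li0)
      then show ?thesis unfolding f_inf_def by (simp only:) simp
    next
      case True
      have us: "upper_series l f x = limsup (\<lambda>n. ereal (\<Sum>k<n. l k * a k x))"
        unfolding upper_series_def fa[OF True] emul_def by simp
      have fi: "f_inf x = limsup (\<lambda>k. ereal (a k x))"
        unfolding f_inf_def fa[OF True] ..
      have bM: "a k x \<le> real_of_ereal (SUP k. f k x)" for k
      proof -
        have "ereal (a k x) \<le> G 0 x" using fG[of k x] GF[of k x] fa[OF True, of k] G0 by simp
        then show ?thesis using Gs[OF True, of 0] G0 by simp
      qed
      have sN: "ereal (s N x) = (SUP k\<in>{N..}. ereal (a k x))" for N
        using Gs[OF True, of N] fa[OF True] unfolding G_def by simp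
      show ?thesis unfolding us fi
        by (rule limit_part[OF bM l0 sl li_def li0 sN lineq[OF True]])
    qed
    then have "ereal \<alpha> \<le> val (l, li)" unfolding valeq by (rule INF_greatest)
    then show ?thesis using inLam \<alpha> by auto
  qed
  show ?thesis using weak strong by (meson antisym)
qed

end
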